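(* (1) $k=|B|=\ell_R((\mathfrak C:_R\mathfrak m)/\mathfrak C)\ge e-r>0$. (2) $k\le\sum_{i\in B}r_i\le e-1$; moreover, if $\sum_{i\in B}r_i=e-1$ then $s_{i_0-1}=c-e$.
   Context: Let $(R,\mathfrak m)$ be a one-dimensional local Noetherian domain with quotient field $K$, not regular, analytically irreducible (the integral closure $\overline R$ of $R$ in $K$ is a DVR and a finite $R$-module) and residually rational. Let $v$ be the valuation of $\overline R$ normalized so a uniformizer $t$ has value 1, $v(R)=\{v(a):a\in R\setminus\{0\}\}$, $\mathfrak C=(R:_K\overline R)=t^c\overline R$ with $c$ the least element of $v(R)$ with $c+\mathbb N\subseteq v(R)$, $\delta=\ell_R(\overline R/R)$, $r=\ell_R((R:_K\mathfrak m)/R)$, $e$ the least positive element of $v(R)$, $n=c-\delta$. Write $v(R)=\{s_0=0<s_1<\cdots\}$ ($s_n=c$), $R_i=\{a\in R:v(a)\ge s_i\}$, $r_i=\ell_R((R:_KR_i)/(R:_KR_{i-1}))$. Let $i_0\in[1,n]$ with $s_{i_0-1}=\min\{y\in v(R):y\ge c-e\}$, $B=\{i_0,\dots,n\}$. Let $x\in\mathfrak m$ with $v(x)=e$, $k=\ell_R(R/(\mathfrak C+xR))$, and $(\mathfrak C:_R\mathfrak m)=\{a\in R:a\mathfrak m\subseteq\mathfrak C\}$. *)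

theory Defs
  imports Main "HOL-Library.Infinite_Set"
begin

text \<open>Ambient field K is the type 'a. R is a subset of K, v a valuation on K - {0}.\<close>

definition Rmod :: "'a::field set \<Rightarrow> 'a set \<Rightarrow> bool" where
  "Rmod R M \<longleftrightarrow> 0 \<in> M \<and> (\<forall>x\<in>M. \<forall>y\<in>M. x + y \<in> M) \<and> (\<forall>a\<in>R. \<forall>x\<in>M. a * x \<in> M)"

definition ideal_of :: "'a::field set \<Rightarrow> 'a set \<Rightarrow> bool" where
  "ideal_of R I \<longleftrightarrow> I \<subseteq> R \<and> Rmod R I"

definition prime_ideal_of :: "'a::field set \<Rightarrow> 'a set \<Rightarrow> bool" where
  "prime_ideal_of R P \<longleftrightarrow> ideal_of R P \<and> P \<noteq> R \<and>
     (\<forall>a\<in>R. \<forall>b\<in>R. a * b \<in> P \<longrightarrow> a \<in> P \<or> b \<in> P)"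

definition Rspan :: "'a::field set \<Rightarrow> 'a set \<Rightarrow> 'a set" where
  "Rspan R F = {\<Sum>x\<in>F. g x * x | g. \<forall>x\<in>F. g x \<in> R}"

text \<open>Length l_R(M/N) of the quotient of R-submodules N \<subseteq> M of K: the maximal length
  of a strictly increasing chain of R-submodules from N to M.\<close>
definition len :: "'a::field set \<Rightarrow> 'a set \<Rightarrow> 'a set \<Rightarrow> nat" where
  "len R M N = Sup {n. \<exists>f::nat \<Rightarrow> 'a set. f 0 = N \<and> f n = M \<and>
       (\<forall>i<n. f i \<subset> f (Suc i)) \<and> (\<forall>i\<le>n. Rmod R (f i))}"

definition colon :: "'a::field set \<Rightarrow> 'a set \<Rightarrow> 'a set" where
  "colon N M = {z. \<forall>y\<in>M. z * y \<in> N}"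

definition maxideal :: "'a::field set \<Rightarrow> 'a set" where
  "maxideal R = {a\<in>R. \<not> (\<exists>b\<in>R. a * b = 1)}"

definition integral_over :: "'a::field set \<Rightarrow> 'a \<Rightarrow> bool" where
  "integral_over R z \<longleftrightarrow> (\<exists>n c. (\<forall>i<n. c i \<in> R) \<and> z ^ n + (\<Sum>i<n. c i * z ^ i) = 0)"

text \<open>Valuation ring of v (with v only meaningful on nonzero elements).\<close>
definition vring :: "('a::field \<Rightarrow> int) \<Rightarrow> 'a set" where
  "vring v = {z. z = 0 \<or> 0 \<le> v z}"

definition setting :: "'a::field set \<Rightarrow> ('a \<Rightarrow> int) \<Rightarrow> bool" where
  "setting R v \<longleftrightarrow>
     \<comment> \<open>R is a subring (domain) of K\<close>
     0 \<in> R \<and> 1 \<in> R \<and> (\<forall>a\<in>R. \<forall>b\<in>R. a + b \<in> R \<and> a - b \<in> R \<and> a * b \<in> R) \<and>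
     \<comment> \<open>K is the quotient field of R\<close>
     (\<forall>z. \<exists>a\<in>R. \<exists>b\<in>R. b \<noteq> 0 \<and> z = a / b) \<and>
     \<comment> \<open>Noetherian\<close>
     (\<forall>I. ideal_of R I \<longrightarrow> (\<exists>F. finite F \<and> F \<subseteq> I \<and> I = Rspan R F)) \<and>
     \<comment> \<open>local with maximal ideal m = nonunits\<close>
     ideal_of R (maxideal R) \<and>
     \<comment> \<open>one-dimensional: the prime ideals are exactly 0 and m, with m nonzero\<close>
     maxideal R \<noteq> {0} \<and> (\<forall>P. prime_ideal_of R P \<longleftrightarrow> P = {0} \<or> P = maxideal R) \<and>
     \<comment> \<open>v is a discrete valuation of K, normalized\<close>
     (\<forall>x y. x \<noteq> 0 \<longrightarrow> y \<noteq> 0 \<longrightarrow> v (x * y) = v x + v y) \<and>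
     (\<forall>x y. x \<noteq> 0 \<longrightarrow> y \<noteq> 0 \<longrightarrow> x + y \<noteq> 0 \<longrightarrow> min (v x) (v y) \<le> v (x + y)) \<and>
     (\<exists>t. t \<noteq> 0 \<and> v t = 1) \<and>
     \<comment> \<open>the integral closure of R in K is the valuation ring of v (a DVR)\<close>
     vring v = {z. integral_over R z} \<and>
     \<comment> \<open>and a finite R-module\<close>
     (\<exists>F. finite F \<and> F \<subseteq> vring v \<and> vring v = Rspan R F) \<and>
     \<comment> \<open>residually rational\<close>
     (\<forall>y\<in>vring v. \<exists>a\<in>R. y = a \<or> 0 < v (y - a)) \<and>
     \<comment> \<open>not regular\<close>
     R \<noteq> vring v"

definition valset :: "'a::field set \<Rightarrow> ('a \<Rightarrow> int) \<Rightarrow> nat set" where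
  "valset R v = {nat (v a) | a. a \<in> R \<and> a \<noteq> 0}"

definition cond_c :: "'a::field set \<Rightarrow> ('a \<Rightarrow> int) \<Rightarrow> nat" where
  "cond_c R v = (LEAST c. c \<in> valset R v \<and> {c..} \<subseteq> valset R v)"

definition mult_e :: "'a::field set \<Rightarrow> ('a \<Rightarrow> int) \<Rightarrow> nat" where
  "mult_e R v = (LEAST e. e \<in> valset R v \<and> 0 < e)"

definition sval :: "'a::field set \<Rightarrow> ('a \<Rightarrow> int) \<Rightarrow> nat \<Rightarrow> nat" where
  "sval R v i = enumerate (valset R v) i"

definition Rsub :: "'a::field set \<Rightarrow> ('a \<Rightarrow> int) \<Rightarrow> nat \<Rightarrow> 'a set" where
  "Rsub R v i = {a\<in>R. a = 0 \<or> int (sval R v i) \<le> v a}"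

definition rr :: "'a::field set \<Rightarrow> ('a \<Rightarrow> int) \<Rightarrow> nat \<Rightarrow> nat" where
  "rr R v i = len R (colon R (Rsub R v i)) (colon R (Rsub R v (i - 1)))"

definition conductor :: "'a::field set \<Rightarrow> ('a \<Rightarrow> int) \<Rightarrow> 'a set" where
  "conductor R v = colon R (vring v)"

end

theory Submission
  imports Defs
begin


locale ctx =
  fixes R :: "'a::field set" and v :: "'a \<Rightarrow> int"
  assumes st: "setting R v"
begin

lemma sts0: "0 \<in> R"
  using st unfolding setting_def by (elim conjE) assumption
lemma sts1: "1 \<in> R"
  using st unfolding setting_def by (elim conjE) assumption
lemma sts2: "(\<forall>a\<in>R. \<forall>b\<in>R. a + b \<in> R \<and> a - b \<in> R \<and> a * b \<in> R)"
  using st unfolding setting_def by (elim conjE) assumption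
lemma sts3: "\<forall>z. \<exists>a\<in>R. \<exists>b\<in>R. b \<noteq> 0 \<and> z = a / b"
  using st unfolding setting_def by (elim conjE) assumption
lemma sts4: "(\<forall>x y. x \<noteq> 0 \<longrightarrow> y \<noteq> 0 \<longrightarrow> v (x * y) = v x + v y)"
  using st unfolding setting_def by (elim conjE) assumption
lemma sts5: "(\<forall>x y. x \<noteq> 0 \<longrightarrow> y \<noteq> 0 \<longrightarrow> x + y \<noteq> 0 \<longrightarrow> min (v x) (v y) \<le> v (x + y))"
  using st unfolding setting_def by (elim conjE) assumption
lemma sts6: "(\<exists>t. t \<noteq> 0 \<and> v t = 1)"
  using st unfolding setting_def by (elim conjE) assumption
lemma sts7: "vring v = {z. integral_over R z}"
  using st unfolding setting_def by (elim conjE) assumption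
lemma sts8: "(\<exists>F. finite F \<and> F \<subseteq> vring v \<and> vring v = Rspan R F)"
  using st unfolding setting_def by (elim conjE) assumption
lemma sts9: "(\<forall>y\<in>vring v. \<exists>a\<in>R. y = a \<or> 0 < v (y - a))"
  using st unfolding setting_def by (elim conjE) assumption
lemma sts10: "R \<noteq> vring v"
  using st unfolding setting_def by (elim conjE) assumption
lemma sts_R: "0 \<in> R \<and> 1 \<in> R \<and> (\<forall>a\<in>R. \<forall>b\<in>R. a + b \<in> R \<and> a - b \<in> R \<and> a * b \<in> R)" using sts0 sts1 sts2 by blast

lemma R0: "0 \<in> R" and R1: "1 \<in> R"
  and Radd: "a \<in> R \<Longrightarrow> b \<in> R \<Longrightarrow> a + b \<in> R"
  and Rdiff: "a \<in> R \<Longrightarrow> b \<in> R \<Longrightarrow> a - b \<in> R"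
  and Rmul: "a \<in> R \<Longrightarrow> b \<in> R \<Longrightarrow> a * b \<in> R"
  using sts_R by auto

lemma Rneg: "a \<in> R \<Longrightarrow> - a \<in> R"
  using Rdiff[OF R0] by force

lemma vmul: "x \<noteq> 0 \<Longrightarrow> y \<noteq> 0 \<Longrightarrow> v (x * y) = v x + v y"
  using sts4 by blast
lemma vadd: "x \<noteq> 0 \<Longrightarrow> y \<noteq> 0 \<Longrightarrow> x + y \<noteq> 0 \<Longrightarrow> min (v x) (v y) \<le> v (x + y)"
  using sts5 by blast
lemma texists: "\<exists>t. t \<noteq> 0 \<and> v t = 1" using sts6 .
lemma vring_int: "vring v = {z. integral_over R z}" using sts7 .
lemma fin: "\<exists>F. finite F \<and> F \<subseteq> vring v \<and> vring v = Rspan R F" using sts8 .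
lemma resid: "\<forall>y\<in>vring v. \<exists>a\<in>R. y = a \<or> 0 < v (y - a)" using sts9 .
lemma notreg: "R \<noteq> vring v" using sts10 .
lemma quot: "\<forall>z. \<exists>a\<in>R. \<exists>b\<in>R. b \<noteq> 0 \<and> z = a / b" using sts3 .

lemma v1: "v 1 = 0"
  using vmul[of 1 1] by simp

lemma vinv: "x \<noteq> 0 \<Longrightarrow> v (inverse x) = - v x"
  using vmul[of x "inverse x"] v1 by simp

lemma vdiv: "x \<noteq> 0 \<Longrightarrow> y \<noteq> 0 \<Longrightarrow> v (x / y) = v x - v y"
  by (simp add: divide_inverse vmul vinv)

lemma vneg: "v (- x) = v x"
proof (cases "x = 0")
  case False
  have "v (-1) + v (-1) = 0" using vmul[of "-1" "-1"] v1 by simp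
  hence "v (-1) = 0" by simp
  thus ?thesis using vmul[of "-1" x] False by simp
qed simp

lemma vminus: "x \<noteq> 0 \<Longrightarrow> y \<noteq> 0 \<Longrightarrow> x - y \<noteq> 0 \<Longrightarrow> min (v x) (v y) \<le> v (x - y)"
  using vadd[of x "-y"] vneg[of y] by simp

lemma vstrict: "x \<noteq> 0 \<Longrightarrow> y \<noteq> 0 \<Longrightarrow> v x < v y \<Longrightarrow> x + y \<noteq> 0 \<and> v (x + y) = v x"
proof -
  assume a: "x \<noteq> 0" "y \<noteq> 0" "v x < v y"
  have ne: "x + y \<noteq> 0"
  proof
    assume "x + y = 0" hence "x = - y" by (simp add: eq_neg_iff_add_eq_0)
    thus False using a vneg by simp
  qed
  have "min (v x) (v y) \<le> v (x + y)" using vadd a ne by blast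
  hence g: "v x \<le> v (x + y)" using a by simp
  have "min (v (x + y)) (v y) \<le> v ((x + y) - y)"
    using vminus[of "x+y" y] a ne by simp
  hence "v (x+y) \<le> v x" using a by auto
  with g ne show ?thesis by simp
qed

definition pw :: "int \<Rightarrow> 'a" where
  "pw j = (SOME z. z \<noteq> 0 \<and> v z = j)"

lemma pw: "pw j \<noteq> 0 \<and> v (pw j) = j"
proof -
  obtain t where t: "t \<noteq> 0" "v t = 1" using texists by blast
  have p: "t ^ n \<noteq> 0 \<and> v (t ^ n) = int n" for n
    by (induction n) (auto simp: v1 vmul t)
  have "\<exists>z. z \<noteq> 0 \<and> v z = j"
  proof (cases "j \<ge> 0")
    case True thus ?thesis using p[of "nat j"] by (intro exI[of _ "t ^ nat j"]) auto
  next
    case False thus ?thesis using p[of "nat (-j)"] vinv[of "t ^ nat (-j)"] by (intro exI[of _ "inverse (t ^ nat (-j))"]) auto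
  qed
  thus ?thesis unfolding pw_def by (rule someI_ex)
qed

lemma pw_ne: "pw j \<noteq> 0" and vpw[simp]: "v (pw j) = j" using pw by auto

lemma R_sub_vring: "R \<subseteq> vring v"
proof
  fix a assume a: "a \<in> R"
  have "integral_over R a" unfolding integral_over_def
    by (rule exI[of _ 1], rule exI[of _ "\<lambda>_. - a"]) (auto simp: a Rneg)
  thus "a \<in> vring v" using vring_int by auto
qed

lemma vR: "a \<in> R \<Longrightarrow> a \<noteq> 0 \<Longrightarrow> 0 \<le> v a"
  using R_sub_vring unfolding vring_def by auto

definition up :: "int \<Rightarrow> 'a set" where "up b = {z. z = 0 \<or> b \<le> v z}"
definition vals :: "'a set \<Rightarrow> int set" where "vals M = {v z | z. z \<in> M \<and> z \<noteq> 0}"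

lemma Rmod_up: "Rmod R (up b)"
  unfolding Rmod_def up_def
proof (intro conjI ballI)
  fix x y assume "x \<in> {z. z = 0 \<or> b \<le> v z}" "y \<in> {z. z = 0 \<or> b \<le> v z}"
  thus "x + y \<in> {z. z = 0 \<or> b \<le> v z}"
    using vadd[of x y] by (cases "x = 0"; cases "y = 0"; cases "x + y = 0") auto
next
  fix a x assume "a \<in> R" "x \<in> {z. z = 0 \<or> b \<le> v z}"
  thus "a * x \<in> {z. z = 0 \<or> b \<le> v z}"
    using vmul[of a x] vR[of a] by (cases "a = 0"; cases "x = 0") auto
qed simp

lemma vring_up: "vring v = up 0"
  unfolding vring_def up_def by auto

lemma Rmod_R: "Rmod R R"
  unfolding Rmod_def using R0 Radd Rmul by auto

lemma Rmod_colon: "Rmod R (colon R M)"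
  unfolding Rmod_def colon_def using R0 Radd Rmul
  by (auto simp: distrib_right mult.assoc)

lemma Rmod_neg: "Rmod R M \<Longrightarrow> x \<in> M \<Longrightarrow> - x \<in> M"
  unfolding Rmod_def using Rneg[OF R1] by (metis mult_minus1)

lemma Rmod_diff: "Rmod R M \<Longrightarrow> x \<in> M \<Longrightarrow> y \<in> M \<Longrightarrow> x - y \<in> M"
  using Rmod_neg[of M y] unfolding Rmod_def by (metis diff_conv_add_uminus)

lemma Rmod_0: "Rmod R M \<Longrightarrow> 0 \<in> M" and Rmod_add: "Rmod R M \<Longrightarrow> x \<in> M \<Longrightarrow> y \<in> M \<Longrightarrow> x + y \<in> M"
  and Rmod_smul: "Rmod R M \<Longrightarrow> a \<in> R \<Longrightarrow> x \<in> M \<Longrightarrow> a * x \<in> M"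
  unfolding Rmod_def by auto

end


context ctx begin

lemma valsI: "z \<in> M \<Longrightarrow> z \<noteq> 0 \<Longrightarrow> v z \<in> vals M"
  unfolding vals_def by blast
lemma valsD: "y \<in> vals M \<Longrightarrow> \<exists>z. z \<in> M \<and> z \<noteq> 0 \<and> v z = y"
  unfolding vals_def by blast

lemma up_sub: "b \<le> b' \<Longrightarrow> up b' \<subseteq> up b" unfolding up_def by auto

lemma vals_up: "vals (up b) = {b..}"
proof
  show "vals (up b) \<subseteq> {b..}" unfolding up_def by (auto dest!: valsD)
  show "{b..} \<subseteq> vals (up b)"
  proof
    fix y assume "y \<in> {b..}"
    thus "y \<in> vals (up b)" using pw[of y] valsI[of "pw y" "up b"] unfolding up_def by auto
  qed
qed

lemma key:
  assumes A: "Rmod R A" and A': "Rmod R A'" and sub: "A \<subseteq> A'" and ub: "up b \<subseteq> A"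
    and vv: "vals A' \<subseteq> vals A"
  shows "A' = A"
proof (rule ccontr)
  assume "A' \<noteq> A"
  then obtain w where w: "w \<in> A'" "w \<notin> A" using sub by blast
  have bnd: "z \<in> A' \<Longrightarrow> z \<notin> A \<Longrightarrow> z \<noteq> 0 \<and> v z < b" for z
    using ub Rmod_0[OF A] unfolding up_def by (force simp: subset_eq)
  have "\<exists>x. (x \<in> A' \<and> x \<notin> A) \<and> (\<forall>y. (y \<in> A' \<and> y \<notin> A) \<longrightarrow> nat (b - v x) \<le> nat (b - v y))"
    by (rule ex_has_least_nat[of "\<lambda>z. z \<in> A' \<and> z \<notin> A" w "\<lambda>z. nat (b - v z)"]) (use w in simp)
  then obtain w0 where w0: "w0 \<in> A' \<and> w0 \<notin> A"
    and mx0: "\<forall>y. (y \<in> A' \<and> y \<notin> A) \<longrightarrow> nat (b - v w0) \<le> nat (b - v y)" by blast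
  have mx: "\<And>y. y \<in> A' \<and> y \<notin> A \<Longrightarrow> nat (b - v w0) \<le> nat (b - v y)" using mx0 by blast
  have w0n: "w0 \<noteq> 0" "v w0 < b" using bnd w0 by auto
  have "v w0 \<in> vals A'" using w0 w0n valsI by blast
  hence "v w0 \<in> vals A" using vv by blast
  then obtain a where a: "a \<in> A" "a \<noteq> 0" "v a = v w0" using valsD by blast
  have "w0 / a \<in> vring v" unfolding vring_def using vdiv[of w0 a] a w0n by simp
  then obtain u where u: "u \<in> R" "w0 / a = u \<or> 0 < v (w0 / a - u)" using resid by blast
  have ua: "u * a \<in> A" using Rmod_smul[OF A u(1) a(1)] .
  show False
  proof (cases "w0 / a = u")
    case True
    hence "w0 = u * a" using a(2) by (simp add: field_simps)
    thus False using ua w0 by simp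
  next
    case False
    hence pos: "0 < v (w0 / a - u)" using u by simp
    define w1 where "w1 = w0 - u * a"
    have w1A': "w1 \<in> A'" unfolding w1_def using Rmod_diff[OF A'] w0 ua sub by blast
    have w1A: "w1 \<notin> A"
    proof
      assume "w1 \<in> A" hence "w1 + u * a \<in> A" using Rmod_add[OF A] ua by blast
      thus False using w0 unfolding w1_def by simp
    qed
    have "w1 = a * (w0 / a - u)" unfolding w1_def using a(2) by (simp add: field_simps)
    moreover have "w0 / a - u \<noteq> 0" using False by simp
    ultimately have "v w1 = v a + v (w0 / a - u)" using vmul a(2) by simp
    hence "v w1 > v w0" using pos a by simp
    moreover have "v w1 < b" using bnd w1A' w1A by blast
    moreover have "nat (b - v w0) \<le> nat (b - v w1)" using mx w1A' w1A by blast
    ultimately show False by simp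
  qed
qed

lemma vals_mono: "A \<subseteq> B \<Longrightarrow> vals A \<subseteq> vals B" by (auto dest!: valsD intro!: valsI)

lemma fin_diff:
  assumes "up b \<subseteq> N" "M \<subseteq> up a"
  shows "finite (vals M - vals N)"
proof -
  have "vals M - vals N \<subseteq> {a..<b}"
  proof
    fix y assume y: "y \<in> vals M - vals N"
    have "a \<le> y" using y assms(2) unfolding up_def by (auto dest!: valsD)
    moreover have "\<not> b \<le> y"
    proof
      assume "b \<le> y" hence "y \<in> vals N" using vals_mono[OF assms(1)] vals_up by auto
      thus False using y by blast
    qed
    ultimately show "y \<in> {a..<b}" by simp
  qed
  thus ?thesis by (rule finite_subset) simp
qed

lemma chain_mono:
  assumes "\<forall>i<n. f i \<subset> f (Suc i)" "i \<le> j" "j \<le> n"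
  shows "f i \<subseteq> f j"
  using assms(2,3)
proof (induction j)
  case 0 thus ?case by simp
next
  case (Suc j)
  show ?case
  proof (cases "i = Suc j")
    case False
    hence "f i \<subseteq> f j" using Suc by simp
    also have "f j \<subseteq> f (Suc j)"
    proof -
      have "j < n" using Suc.prems by simp
      hence "f j \<subset> f (Suc j)" using assms(1) by blast
      thus ?thesis by blast
    qed
    finally show ?thesis .
  qed simp
qed

lemma chain_bound:
  assumes N: "Rmod R N" and M: "Rmod R M" and NM: "N \<subseteq> M" and ub: "up b \<subseteq> N" and la: "M \<subseteq> up a"
    and f: "f 0 = N" "f n = M" "\<forall>i<n. f i \<subset> f (Suc i)" "\<forall>i\<le>n. Rmod R (f i)"
  shows "n \<le> card (vals M - vals N)"
proof -
  have finD: "finite (vals M - vals N)" using fin_diff[OF ub la] .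
  have sub: "i \<le> n \<Longrightarrow> f i \<subseteq> M \<and> N \<subseteq> f i" for i
    using chain_mono[OF f(3), of i n] chain_mono[OF f(3), of 0 i] f by auto
  have "i \<le> n \<Longrightarrow> i \<le> card (vals (f i) - vals N)" for i
  proof (induction i)
    case 0 thus ?case by simp
  next
    case (Suc i)
    have ss: "f i \<subset> f (Suc i)" using f(3) Suc.prems by auto
    have nsub: "vals (f (Suc i)) \<noteq> vals (f i)"
    proof
      assume eq: "vals (f (Suc i)) = vals (f i)"
      have "f (Suc i) = f i"
        by (rule key[of "f i" "f (Suc i)" b]) (use f(4) Suc.prems ss sub[of i] ub eq in auto)
      thus False using ss by simp
    qed
    have "vals (f i) \<subseteq> vals (f (Suc i))" using vals_mono ss by auto
    hence ps: "vals (f i) - vals N \<subset> vals (f (Suc i)) - vals N"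
      using nsub vals_mono[of N "f i"] sub[of i] Suc.prems by auto
    have "finite (vals (f (Suc i)) - vals N)"
      by (rule finite_subset[OF _ finD]) (use vals_mono[of "f (Suc i)" M] sub[OF Suc.prems] in auto)
    hence "card (vals (f i) - vals N) < card (vals (f (Suc i)) - vals N)"
      using psubset_card_mono ps by blast
    thus ?case using Suc by simp
  qed
  hence "n \<le> card (vals (f n) - vals N)" by simp
  thus ?thesis using f(2) by simp
qed

lemma Rmod_Int: "Rmod R A \<Longrightarrow> Rmod R B \<Longrightarrow> Rmod R (A \<inter> B)"
  unfolding Rmod_def by auto

lemma Rmod_sum: "Rmod R A \<Longrightarrow> Rmod R B \<Longrightarrow> Rmod R {p + q | p q. p \<in> A \<and> q \<in> B}"
  unfolding Rmod_def
proof (intro conjI ballI)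
  assume A: "0 \<in> A \<and> (\<forall>x\<in>A. \<forall>y\<in>A. x + y \<in> A) \<and> (\<forall>a\<in>R. \<forall>x\<in>A. a * x \<in> A)"
     and B: "0 \<in> B \<and> (\<forall>x\<in>B. \<forall>y\<in>B. x + y \<in> B) \<and> (\<forall>a\<in>R. \<forall>x\<in>B. a * x \<in> B)"
  show "0 \<in> {p + q | p q. p \<in> A \<and> q \<in> B}" using A B by force
  fix x y assume "x \<in> {p + q | p q. p \<in> A \<and> q \<in> B}" "y \<in> {p + q | p q. p \<in> A \<and> q \<in> B}"
  then obtain p q p' q' where "x = p + q" "y = p' + q'" "p \<in> A" "q \<in> B" "p' \<in> A" "q' \<in> B" by blast
  thus "x + y \<in> {p + q | p q. p \<in> A \<and> q \<in> B}" using A B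
    by (intro CollectI exI[of _ "p + p'"] exI[of _ "q + q'"]) (auto simp: algebra_simps)
next
  fix a x assume A: "0 \<in> A \<and> (\<forall>x\<in>A. \<forall>y\<in>A. x + y \<in> A) \<and> (\<forall>a\<in>R. \<forall>x\<in>A. a * x \<in> A)"
     and B: "0 \<in> B \<and> (\<forall>x\<in>B. \<forall>y\<in>B. x + y \<in> B) \<and> (\<forall>a\<in>R. \<forall>x\<in>B. a * x \<in> B)"
     and a: "a \<in> R" and "x \<in> {p + q | p q. p \<in> A \<and> q \<in> B}"
  then obtain p q where "x = p + q" "p \<in> A" "q \<in> B" by blast
  thus "a * x \<in> {p + q | p q. p \<in> A \<and> q \<in> B}" using A B a
    by (intro CollectI exI[of _ "a * p"] exI[of _ "a * q"]) (auto simp: algebra_simps)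
qed

lemma chain_exists:
  assumes N: "Rmod R N" and ub: "up b \<subseteq> N"
  shows "Rmod R M \<Longrightarrow> N \<subseteq> M \<Longrightarrow> M \<subseteq> up a \<Longrightarrow> card (vals M - vals N) = d \<Longrightarrow>
    \<exists>f. f 0 = N \<and> f d = M \<and> (\<forall>i<d. f i \<subset> f (Suc i)) \<and> (\<forall>i\<le>d. Rmod R (f i))"
proof (induction d arbitrary: M)
  case 0
  have "vals M - vals N = {}" using 0 fin_diff[OF ub 0(3)] by simp
  hence "M = N" using key[OF N 0(1) 0(2) ub] by blast
  thus ?case using N by (intro exI[of _ "\<lambda>_. N"]) auto
next
  case (Suc d)
  let ?D = "vals M - vals N"
  have finD: "finite ?D" using fin_diff[OF ub Suc.prems(3)] .
  have neD: "?D \<noteq> {}" using Suc.prems(4) by (metis card.empty Zero_not_Suc)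
  define dm where "dm = Min ?D"
  have dmD: "dm \<in> ?D" unfolding dm_def by (rule Min_in[OF finD neD])
  have dmle: "y \<in> ?D \<Longrightarrow> dm \<le> y" for y unfolding dm_def using finD by simp
  define M2 where "M2 = {p + q | p q. p \<in> N \<and> q \<in> M \<inter> up (dm + 1)}"
  have M2mod: "Rmod R M2" unfolding M2_def by (rule Rmod_sum[OF N Rmod_Int[OF Suc.prems(1) Rmod_up]])
  have NM2: "N \<subseteq> M2" unfolding M2_def
  proof
    fix p assume "p \<in> N" thus "p \<in> {p + q | p q. p \<in> N \<and> q \<in> M \<inter> up (dm + 1)}"
      using Rmod_0[OF Suc.prems(1)] unfolding up_def by (intro CollectI exI[of _ p] exI[of _ 0]) auto
  qed
  have M2M: "M2 \<subseteq> M" unfolding M2_def using Rmod_add[OF Suc.prems(1)] Suc.prems(2) by blast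
  have M2a: "M2 \<subseteq> up a" using M2M Suc.prems(3) by blast
  have D2: "vals M2 - vals N = ?D - {dm}"
  proof
    show "vals M2 - vals N \<subseteq> ?D - {dm}"
    proof
      fix y assume y: "y \<in> vals M2 - vals N"
      then obtain z where z: "z \<in> M2" "z \<noteq> 0" "v z = y" using valsD by blast
      have "y \<in> ?D" using y vals_mono[OF M2M] by auto
      moreover have "y \<noteq> dm"
      proof
        assume ydm: "y = dm"
        obtain p q where pq: "z = p + q" "p \<in> N" "q \<in> M" "q \<in> up (dm + 1)" using z(1) unfolding M2_def by blast
        show False
        proof (cases "q = 0")
          case True
          hence "y \<in> vals N" using pq z valsI[of p N] by auto
          thus False using y by blast
        next
          case qn: False
          hence vq: "v q \<ge> dm + 1" using pq unfolding up_def by auto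
          have "p = z + (- q)" using pq by simp
          moreover have "- q \<noteq> 0" using qn by simp
          moreover have "v z < v (- q)" using vq ydm z vneg[of q] by simp
          ultimately have "p \<noteq> 0 \<and> v p = v z" using vstrict[of z "- q"] z by simp
          hence "y \<in> vals N" using pq z valsI[of p N] by auto
          thus False using y by blast
        qed
      qed
      ultimately show "y \<in> ?D - {dm}" by simp
    qed
  next
    show "?D - {dm} \<subseteq> vals M2 - vals N"
    proof
      fix y assume y: "y \<in> ?D - {dm}"
      then obtain z where z: "z \<in> M" "z \<noteq> 0" "v z = y" using valsD by blast
      have "dm < y" using dmle[of y] y by auto
      hence "z \<in> M2" unfolding M2_def using z Rmod_0[OF N] unfolding up_def
        by (intro CollectI exI[of _ 0] exI[of _ z]) auto
      thus "y \<in> vals M2 - vals N" using z y valsI[of z M2] by auto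
    qed
  qed
  have "card (vals M2 - vals N) = d" using D2 Suc.prems(4) finD dmD by simp
  then obtain g where g: "g 0 = N" "g d = M2" "\<forall>i<d. g i \<subset> g (Suc i)" "\<forall>i\<le>d. Rmod R (g i)"
    using Suc.IH[OF M2mod NM2 M2a] by blast
  have "dm \<notin> vals M2" using D2 dmD by blast
  hence M2ne: "M2 \<noteq> M" using dmD by blast
  show ?case
  proof (intro exI[of _ "g(Suc d := M)"] conjI allI impI)
    show "(g(Suc d := M)) 0 = N" using g by simp
    show "(g(Suc d := M)) (Suc d) = M" by simp
    fix i
    show "i < Suc d \<Longrightarrow> (g(Suc d := M)) i \<subset> (g(Suc d := M)) (Suc i)"
    proof -
      assume "i < Suc d"
      hence "i < d \<or> i = d" by auto
      thus ?thesis
      proof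
        assume "i < d" thus ?thesis using g(3) by simp
      next
        assume "i = d" thus ?thesis using g(2) M2M M2ne by auto
      qed
    qed
    show "i \<le> Suc d \<Longrightarrow> Rmod R ((g(Suc d := M)) i)"
      using g(4) Suc.prems(1) by (cases "i = Suc d") auto
  qed
qed

lemma len_eq:
  assumes N: "Rmod R N" and M: "Rmod R M" and NM: "N \<subseteq> M" and ub: "up b \<subseteq> N" and la: "M \<subseteq> up a"
  shows "len R M N = card (vals M - vals N)"
  unfolding len_def
proof (rule cSup_eq_maximum)
  show "card (vals M - vals N) \<in> {n. \<exists>f::nat \<Rightarrow> 'a set. f 0 = N \<and> f n = M \<and>
       (\<forall>i<n. f i \<subset> f (Suc i)) \<and> (\<forall>i\<le>n. Rmod R (f i))}"
    using chain_exists[OF N ub M NM la refl] by blast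
  show "\<And>x. x \<in> {n. \<exists>f::nat \<Rightarrow> 'a set. f 0 = N \<and> f n = M \<and>
       (\<forall>i<n. f i \<subset> f (Suc i)) \<and> (\<forall>i\<le>n. Rmod R (f i))} \<Longrightarrow> x \<le> card (vals M - vals N)"
    using chain_bound[OF N M NM ub la] by blast
qed

end


context ctx begin

abbreviation "cc \<equiv> cond_c R v"
abbreviation "ee \<equiv> mult_e R v"
abbreviation "S \<equiv> vals R"
abbreviation "V \<equiv> valset R v"

lemma R_up0: "R \<subseteq> up 0" unfolding up_def using vR by auto

lemma Rsum: "finite F \<Longrightarrow> (\<And>x. x \<in> F \<Longrightarrow> h x \<in> R) \<Longrightarrow> sum h F \<in> R"
  by (induction F rule: finite_induct) (auto intro: Radd R0)

lemma Rprod: "finite F \<Longrightarrow> (\<And>x. x \<in> F \<Longrightarrow> h x \<in> R) \<Longrightarrow> prod h F \<in> R"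
  by (induction F rule: finite_induct) (auto intro: Rmul R1)

lemma cond_exists: "\<exists>b0. 0 \<le> b0 \<and> up b0 \<subseteq> R"
proof -
  obtain F where F: "finite F" "F \<subseteq> vring v" "vring v = Rspan R F" using fin by blast
  have "\<forall>f. \<exists>b. b \<in> R \<and> b \<noteq> 0 \<and> f * b \<in> R"
  proof
    fix f
    obtain a b where ab: "a \<in> R" "b \<in> R" "b \<noteq> 0" "f = a / b" using quot by blast
    thus "\<exists>b. b \<in> R \<and> b \<noteq> 0 \<and> f * b \<in> R" by (intro exI[of _ b]) auto
  qed
  then obtain den where den: "\<And>f. den f \<in> R \<and> den f \<noteq> 0 \<and> f * den f \<in> R" by metis
  define d where "d = prod den F"
  have dR: "d \<in> R" unfolding d_def using Rprod[OF F(1)] den by blast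
  have d0: "d \<noteq> 0" unfolding d_def using den F(1) by simp
  have dy: "d * y \<in> R" if y: "y \<in> vring v" for y
  proof -
    obtain g where g: "\<forall>x\<in>F. g x \<in> R" "y = (\<Sum>x\<in>F. g x * x)"
      using y F(3) unfolding Rspan_def by blast
    have "d * y = (\<Sum>x\<in>F. g x * (x * d))" unfolding g(2) by (simp add: sum_distrib_left algebra_simps)
    also have "\<dots> \<in> R"
    proof (rule Rsum[OF F(1)])
      fix x assume x: "x \<in> F"
      have "d = den x * prod den (F - {x})" unfolding d_def using F(1) x by (simp add: prod.remove)
      hence "x * d = (x * den x) * prod den (F - {x})" by simp
      also have "\<dots> \<in> R" using den Rprod[of "F - {x}" den] F(1) Rmul by auto
      finally show "g x * (x * d) \<in> R" using g(1) x Rmul by auto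
    qed
    finally show ?thesis .
  qed
  show ?thesis
  proof (intro exI[of _ "v d"] conjI)
    show "0 \<le> v d" using vR dR d0 by blast
    show "up (v d) \<subseteq> R"
    proof
      fix z assume z: "z \<in> up (v d)"
      show "z \<in> R"
      proof (cases "z = 0")
        case True thus ?thesis using R0 by simp
      next
        case False
        hence "v (z / d) \<ge> 0" using z d0 vdiv unfolding up_def by simp
        hence "z / d \<in> vring v" unfolding vring_def by simp
        hence "d * (z / d) \<in> R" using dy by blast
        thus ?thesis using d0 by simp
      qed
    qed
  qed
qed

lemma V_iff: "y \<in> V \<longleftrightarrow> int y \<in> S"
proof
  assume "y \<in> V"
  then obtain a where "a \<in> R" "a \<noteq> 0" "y = nat (v a)" unfolding valset_def by blast
  thus "int y \<in> S" using vR[of a] valsI[of a R] by simp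
next
  assume "int y \<in> S"
  then obtain a where "a \<in> R" "a \<noteq> 0" "v a = int y" using valsD by blast
  thus "y \<in> V" unfolding valset_def by force
qed

lemma S_nonneg: "y \<in> S \<Longrightarrow> 0 \<le> y" using vR by (auto dest!: valsD)

lemma S_0: "0 \<in> S" using valsI[of 1 R] R1 v1 by simp

lemma S_add: "y \<in> S \<Longrightarrow> y' \<in> S \<Longrightarrow> y + y' \<in> S"
proof -
  assume "y \<in> S" "y' \<in> S"
  then obtain a a' where "a \<in> R" "a \<noteq> 0" "v a = y" "a' \<in> R" "a' \<noteq> 0" "v a' = y'" using valsD by metis
  thus ?thesis using valsI[of "a * a'" R] Rmul vmul by auto
qed

lemma S_iff: "0 \<le> y \<Longrightarrow> y \<in> S \<longleftrightarrow> nat y \<in> V" using V_iff[of "nat y"] by simp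

lemma cond_props: "cc \<in> V" "{cc..} \<subseteq> V" "\<And>c'. c' \<in> V \<Longrightarrow> {c'..} \<subseteq> V \<Longrightarrow> cc \<le> c'"
proof -
  obtain b0 where b0: "0 \<le> b0" "up b0 \<subseteq> R" using cond_exists by blast
  have "{nat b0..} \<subseteq> V"
  proof
    fix y assume "y \<in> {nat b0..}"
    hence "int y \<in> vals (up b0)" using vals_up b0 by auto
    thus "y \<in> V" using vals_mono[OF b0(2)] V_iff by blast
  qed
  hence ex: "nat b0 \<in> V \<and> {nat b0..} \<subseteq> V" by auto
  show "cc \<in> V" "{cc..} \<subseteq> V" unfolding cond_c_def using LeastI[of "\<lambda>c. c \<in> V \<and> {c..} \<subseteq> V", OF ex] by auto
  show "\<And>c'. c' \<in> V \<Longrightarrow> {c'..} \<subseteq> V \<Longrightarrow> cc \<le> c'" unfolding cond_c_def by (rule Least_le) simp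
qed

lemma up_c_R: "up (int cc) \<subseteq> R"
proof -
  obtain b0 where b0: "0 \<le> b0" "up b0 \<subseteq> R" using cond_exists by blast
  let ?A = "R \<inter> up (int cc)"
  have "up (int cc) = ?A"
  proof (rule key[of ?A "up (int cc)" "max b0 (int cc)"])
    show "Rmod R ?A" using Rmod_Int Rmod_R Rmod_up by blast
    show "Rmod R (up (int cc))" by (rule Rmod_up)
    show "?A \<subseteq> up (int cc)" by blast
    show "up (max b0 (int cc)) \<subseteq> ?A" using b0(2) up_sub[of b0 "max b0 (int cc)"] up_sub[of "int cc" "max b0 (int cc)"] by auto
    show "vals (up (int cc)) \<subseteq> vals ?A"
    proof
      fix y assume "y \<in> vals (up (int cc))"
      hence y: "int cc \<le> y" using vals_up by auto
      hence "nat y \<in> V" using cond_props(2) by auto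
      hence "y \<in> S" using S_iff y by simp
      then obtain a where "a \<in> R" "a \<noteq> 0" "v a = y" using valsD by blast
      thus "y \<in> vals ?A" using valsI[of a ?A] y unfolding up_def by auto
    qed
  qed
  thus ?thesis by blast
qed

lemma conductor_eq: "conductor R v = up (int cc)"
proof
  show "up (int cc) \<subseteq> conductor R v"
    unfolding conductor_def colon_def
  proof (clarify)
    fix z y assume z: "z \<in> up (int cc)" and y: "y \<in> vring v"
    have "z * y \<in> up (int cc)"
      using z y vmul[of z y] unfolding up_def vring_def by (cases "z = 0"; cases "y = 0") auto
    thus "z * y \<in> R" using up_c_R by blast
  qed
next
  show "conductor R v \<subseteq> up (int cc)"
  proof
    fix z assume z: "z \<in> conductor R v"
    show "z \<in> up (int cc)"
    proof (cases "z = 0")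
      case True thus ?thesis unfolding up_def by simp
    next
      case zn: False
      have zR: "z * y \<in> R" if "y \<in> vring v" for y using z that unfolding conductor_def colon_def by blast
      have "z \<in> R" using zR[of 1] unfolding vring_def using v1 by simp
      hence vz: "0 \<le> v z" using vR zn by blast
      have "{nat (v z)..} \<subseteq> V"
      proof
        fix j assume j: "j \<in> {nat (v z)..}"
        have "z * pw (int j - v z) \<in> R" using zR[of "pw (int j - v z)"] j vz unfolding vring_def by (simp add: nat_le_iff)
        moreover have "v (z * pw (int j - v z)) = int j" using vmul[OF zn pw_ne] by simp
        ultimately have "int j \<in> S" using valsI[of "z * pw (int j - v z)" R] zn pw_ne by force
        thus "j \<in> V" using V_iff by blast
      qed
      hence "cc \<le> nat (v z)" using cond_props(3) by auto
      thus ?thesis unfolding up_def using vz by simp linarith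
    qed
  qed
qed

lemma c_pos: "1 \<le> cc"
proof (rule ccontr)
  assume "\<not> 1 \<le> cc" hence "cc = 0" by simp
  hence "vring v \<subseteq> R" using up_c_R vring_up by simp
  thus False using notreg R_sub_vring by blast
qed

lemma cm1: "cc - 1 \<notin> V"
proof
  assume h: "cc - 1 \<in> V"
  have "{cc - 1..} \<subseteq> V"
  proof
    fix y assume y: "y \<in> {cc - 1..}"
    show "y \<in> V"
    proof (cases "y = cc - 1")
      case True thus ?thesis using h by simp
    next
      case False hence "cc \<le> y" using y by auto
      thus ?thesis using cond_props(2) by auto
    qed
  qed
  hence "cc \<le> cc - 1" using cond_props(3) h by blast
  thus False using c_pos by simp
qed

end


context ctx begin

lemma e_props: "ee \<in> V" "0 < ee" "\<And>y. y \<in> V \<Longrightarrow> 0 < y \<Longrightarrow> ee \<le> y"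
proof -
  have ex: "cc \<in> V \<and> 0 < cc" using cond_props(1) c_pos by simp
  show "ee \<in> V" "0 < ee" unfolding mult_e_def using LeastI[of "\<lambda>e. e \<in> V \<and> 0 < e", OF ex] by auto
  show "\<And>y. y \<in> V \<Longrightarrow> 0 < y \<Longrightarrow> ee \<le> y" unfolding mult_e_def by (rule Least_le) simp
qed

lemma e_le_c: "ee \<le> cc" using e_props(3)[OF cond_props(1)] c_pos by simp

lemma V_add: "y \<in> V \<Longrightarrow> y' \<in> V \<Longrightarrow> y + y' \<in> V"
  using S_add V_iff by (metis of_nat_add)

lemma V_0: "0 \<in> V" using S_0 V_iff by simp

lemma V_mult_e: "j * ee \<in> V"
  by (induction j) (auto simp: V_0 V_add e_props(1))

lemma e_ge2: "2 \<le> ee"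
proof (rule ccontr)
  assume "\<not> 2 \<le> ee" hence e1: "ee = 1" using e_props(2) by simp
  have "y \<in> V" for y using V_mult_e[of y] e1 by simp
  hence "{0..} \<subseteq> V" by blast
  hence "cc \<le> 0" using cond_props(3) V_0 by blast
  thus False using c_pos by simp
qed

lemma unit_lemma:
  assumes y: "y \<in> R" "y \<noteq> 0" "v y = 0"
  shows "inverse y \<in> R"
proof -
  let ?u = "inverse y"
  have "?u \<in> vring v" unfolding vring_def using vinv[OF y(2)] y(3) by simp
  hence "integral_over R ?u" using vring_int by blast
  then obtain n cf where cf: "\<forall>i<n. cf i \<in> R" "?u ^ n + (\<Sum>i<n. cf i * ?u ^ i) = 0"
    unfolding integral_over_def by blast
  have "n \<noteq> 0" using cf(2) by (cases n) auto
  then obtain k where k: "n = Suc k" by (cases n) auto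
  have uy: "?u * y = 1" using y(2) by simp
  have e1: "?u ^ Suc k * y ^ k = ?u"
  proof -
    have "?u ^ Suc k * y ^ k = ?u * (?u * y) ^ k" by (simp add: power_mult_distrib algebra_simps)
    thus ?thesis using uy by simp
  qed
  have e2: "cf i * ?u ^ i * y ^ k = cf i * y ^ (k - i)" if "i < Suc k" for i
  proof -
    have "y ^ k = y ^ i * y ^ (k - i)" using that by (simp add: power_add[symmetric])
    hence "cf i * ?u ^ i * y ^ k = cf i * (?u * y) ^ i * y ^ (k - i)" by (simp add: power_mult_distrib algebra_simps)
    thus ?thesis using uy by simp
  qed
  have "0 = (?u ^ Suc k + (\<Sum>i<Suc k. cf i * ?u ^ i)) * y ^ k" using cf(2) k by simp
  also have "\<dots> = ?u ^ Suc k * y ^ k + (\<Sum>i<Suc k. cf i * ?u ^ i * y ^ k)"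
    by (simp only: distrib_right sum_distrib_right)
  also have "(\<Sum>i<Suc k. cf i * ?u ^ i * y ^ k) = (\<Sum>i<Suc k. cf i * y ^ (k - i))"
    by (intro sum.cong refl e2) simp
  also note e1
  finally have "?u + (\<Sum>i<Suc k. cf i * y ^ (k - i)) = 0" by (rule sym)
  hence "?u = - (\<Sum>i<Suc k. cf i * y ^ (k - i))" by (subst eq_neg_iff_add_eq_0)
  also have "\<dots> \<in> R"
  proof (rule Rneg, rule Rsum)
    fix i assume "i \<in> {..<Suc k}"
    hence "cf i \<in> R" using cf(1) k by simp
    moreover have "y ^ j \<in> R" for j by (induction j) (auto intro: Rmul R1 y(1))
    ultimately show "cf i * y ^ (k - i) \<in> R" using Rmul by blast
  qed simp
  finally show ?thesis .
qed

lemma maxideal_eq: "maxideal R = {a \<in> R. a = 0 \<or> 0 < v a}"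
proof
  show "maxideal R \<subseteq> {a \<in> R. a = 0 \<or> 0 < v a}"
  proof
    fix a assume a: "a \<in> maxideal R"
    hence aR: "a \<in> R" and nu: "\<not> (\<exists>b\<in>R. a * b = 1)" unfolding maxideal_def by auto
    show "a \<in> {a \<in> R. a = 0 \<or> 0 < v a}"
    proof (cases "a = 0")
      case False
      have "v a \<noteq> 0"
      proof
        assume "v a = 0"
        hence "inverse a \<in> R" using unit_lemma aR False by blast
        thus False using nu False by force
      qed
      thus ?thesis using vR aR False by force
    qed (use aR in simp)
  qed
next
  show "{a \<in> R. a = 0 \<or> 0 < v a} \<subseteq> maxideal R"
  proof
    fix a assume a: "a \<in> {a \<in> R. a = 0 \<or> 0 < v a}"
    have "\<not> (\<exists>b\<in>R. a * b = 1)"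
    proof
      assume "\<exists>b\<in>R. a * b = 1"
      then obtain b where b: "b \<in> R" "a * b = 1" by blast
      have an: "a \<noteq> 0" "b \<noteq> 0" using b(2) by auto
      have "v a + v b = 0" using vmul[OF an] b(2) v1 by simp
      thus False using vR[OF b(1) an(2)] a an by simp
    qed
    thus "a \<in> maxideal R" using a unfolding maxideal_def by simp
  qed
qed

lemma m_val: "y \<in> maxideal R \<Longrightarrow> y \<noteq> 0 \<Longrightarrow> int ee \<le> v y"
proof -
  assume y: "y \<in> maxideal R" "y \<noteq> 0"
  hence yR: "y \<in> R" and pos: "0 < v y" using maxideal_eq by auto
  have "v y \<in> S" using valsI[OF yR y(2)] .
  hence "nat (v y) \<in> V" using S_iff pos by simp
  hence "ee \<le> nat (v y)" using e_props(3) pos by simp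
  thus ?thesis using pos by linarith
qed

lemma m_sub: "maxideal R \<subseteq> R" using maxideal_eq by auto

lemma in_m: "a \<in> R \<Longrightarrow> 0 < v a \<Longrightarrow> a \<in> maxideal R" using maxideal_eq by auto

end



lemma enum_count:
  fixes V :: "nat set" assumes inf: "infinite V"
  shows "card {y\<in>V. y < enumerate V i} = i"
proof -
  have "{y\<in>V. y < enumerate V i} = enumerate V ` {..<i}"
  proof
    show "{y\<in>V. y < enumerate V i} \<subseteq> enumerate V ` {..<i}"
    proof
      fix y assume y: "y \<in> {y\<in>V. y < enumerate V i}"
      then obtain j where j: "enumerate V j = y" using enumerate_Ex[OF inf] by blast
      hence "j < i" using y enumerate_mono_iff[OF inf] by auto
      thus "y \<in> enumerate V ` {..<i}" using j by blast
    qed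
    show "enumerate V ` {..<i} \<subseteq> {y\<in>V. y < enumerate V i}"
      using enumerate_in_set[OF inf] enumerate_mono[OF _ inf] by auto
  qed
  moreover have "inj_on (enumerate V) {..<i}" using inj_enumerate[OF inf] by (rule inj_on_subset) simp
  ultimately show ?thesis by (simp add: card_image)
qed

lemma enum_eq:
  fixes V :: "nat set" assumes inf: "infinite V" and y: "y \<in> V" and cnt: "card {z\<in>V. z < y} = i"
  shows "enumerate V i = y"
proof -
  obtain j where j: "enumerate V j = y" using enumerate_Ex[OF inf y] by blast
  have "j = i" using enum_count[OF inf, of j] j cnt by simp
  thus ?thesis using j by simp
qed

lemma mult_in:
  fixes V :: "nat set"
  assumes add: "\<And>x y. x \<in> V \<Longrightarrow> y \<in> V \<Longrightarrow> x + y \<in> V" and eV: "e \<in> V" and w: "w \<in> V"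
  shows "w + e * q \<in> V"
proof (induction q)
  case (Suc q)
  have "w + e * Suc q = (w + e * q) + e" by simp
  thus ?case using add[OF Suc.IH eV] by (simp add: algebra_simps)
qed (simp add: w)

lemma descent:
  fixes V :: "nat set"
  assumes add: "\<And>x y. x \<in> V \<Longrightarrow> y \<in> V \<Longrightarrow> x + y \<in> V" and eV: "e \<in> V" and e0: "0 < e"
  shows "s \<in> V \<Longrightarrow> \<exists>w q. w \<in> V \<and> s = w + e * q \<and> (w < e \<or> w - e \<notin> V)"
proof (induction s rule: less_induct)
  case (less s)
  show ?case
  proof (cases "s < e \<or> s - e \<notin> V")
    case True thus ?thesis using less.prems by (intro exI[of _ s] exI[of _ 0]) auto
  next
    case False
    hence "s - e < s" "s - e \<in> V" using e0 by auto
    then obtain w q where "w \<in> V" "s - e = w + e * q" "w < e \<or> w - e \<notin> V" using less.IH by blast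
    thus ?thesis using False by (intro exI[of _ w] exI[of _ "Suc q"]) auto
  qed
qed

lemma apery_card:
  fixes V :: "nat set"
  assumes add: "\<And>x y. x \<in> V \<Longrightarrow> y \<in> V \<Longrightarrow> x + y \<in> V" and eV: "e \<in> V" and e0: "0 < e" and ec: "e \<le> c"
  shows "card {w\<in>V. w < c \<and> (w < e \<or> w - e \<notin> V)} = card {y\<in>V. c - e \<le> y \<and> y < c}"
proof -
  let ?A = "{w\<in>V. w < c \<and> (w < e \<or> w - e \<notin> V)}"
  let ?J = "{y\<in>V. c - e \<le> y \<and> y < c}"
  define phi where "phi w = w + e * ((c - 1 - w) div e)" for w
  have phiJ: "phi w \<in> ?J" if w: "w \<in> ?A" for w
  proof -
    let ?q = "(c - 1 - w) div e"
    have le: "e * ?q \<le> c - 1 - w" by simp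
    have gt: "c - 1 - w < e * ?q + e" using e0
      by (metis add.commute div_mult_mod_eq mod_less_divisor nat_add_left_cancel_less mult.commute)
    have wc: "w < c" using w by simp
    have "phi w < c" using le wc unfolding phi_def by arith
    moreover have "c - e \<le> phi w" using gt wc unfolding phi_def by arith
    moreover have "phi w \<in> V" unfolding phi_def using mult_in[OF add eV] w by blast
    ultimately show ?thesis by simp
  qed
  have inj: "inj_on phi ?A"
  proof (rule inj_onI)
    fix w w' assume w: "w \<in> ?A" and w': "w' \<in> ?A" and eq: "phi w = phi w'"
    have mod: "w mod e = w' mod e" using eq unfolding phi_def by (metis mod_mult_self2)
    show "w = w'"
    proof (rule ccontr)
      assume ne: "w \<noteq> w'"
      have gen: "False" if a: "a \<in> ?A" "b \<in> ?A" "a < b" "a mod e = b mod e" for a b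
      proof -
        have "e dvd (b - a)" using a(3,4) mod_eq_dvd_iff_nat[of a b e] by simp
        then obtain j where j: "b - a = e * j" by blast
        have "j \<noteq> 0" using j a(3) by (metis mult_0_right zero_less_diff less_irrefl)
        then obtain j' where j': "j = Suc j'" by (cases j) auto
        have b: "b = a + e + e * j'" using j j' a(3) by simp
        hence "e \<le> b" by simp
        moreover have "b - e = a + e * j'" using b by simp
        moreover have "a + e * j' \<in> V" using mult_in[OF add eV] a(1) by blast
        ultimately show False using a(2) by auto
      qed
      show False using ne gen[OF w w'] gen[OF w' w] mod by (cases "w < w'") auto
    qed
  qed
  have surj: "?J \<subseteq> phi ` ?A"
  proof
    fix s assume s: "s \<in> ?J"
    then obtain w q where wq: "w \<in> V" "s = w + e * q" "w < e \<or> w - e \<notin> V"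
      using descent[OF add eV e0] by blast
    have wA: "w \<in> ?A" using wq s by auto
    have "c - 1 - w = e * q + (c - 1 - s)" using wq s by auto
    moreover have "c - 1 - s < e" using s e0 by auto
    ultimately have "(c - 1 - w) div e = q" using e0 by (simp add: div_add1_eq)
    hence "phi w = s" unfolding phi_def using wq by simp
    thus "s \<in> phi ` ?A" using wA by blast
  qed
  have "phi ` ?A = ?J" using phiJ surj by blast
  hence "bij_betw phi ?A ?J" using inj unfolding bij_betw_def by blast
  thus ?thesis by (rule bij_betw_same_card)
qed

lemma gap_card:
  fixes V :: "nat set"
  assumes add: "\<And>x y. x \<in> V \<Longrightarrow> y \<in> V \<Longrightarrow> x + y \<in> V" and eV: "e \<in> V" and e0: "0 < e" and V0: "0 \<in> V"
    and G: "finite G" "G \<subseteq> {y. y \<notin> V \<and> y + e \<in> V}"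
  shows "card G \<le> e - 1"
proof -
  have img: "(\<lambda>y. y mod e) ` G \<subseteq> {1..<e}"
  proof
    fix r assume "r \<in> (\<lambda>y. y mod e) ` G"
    then obtain y where y: "y \<in> G" "r = y mod e" by blast
    have "r \<noteq> 0"
    proof
      assume "r = 0"
      hence "y = 0 + e * (y div e)" using y by auto
      hence "y \<in> V" using mult_in[OF add eV V0] by metis
      thus False using y G by blast
    qed
    thus "r \<in> {1..<e}" using y e0 by auto
  qed
  have inj: "inj_on (\<lambda>y. y mod e) G"
  proof (rule inj_onI)
    fix a b assume a: "a \<in> G" and b: "b \<in> G" and m: "a mod e = b mod e"
    have gen: False if ab: "a \<in> G" "b \<in> G" "a < b" "a mod e = b mod e" for a b
    proof -
      have "e dvd (b - a)" using ab(3,4) mod_eq_dvd_iff_nat[of a b e] by simp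
      then obtain j where j: "b - a = e * j" by blast
      have "j \<noteq> 0" using j ab(3) by (metis mult_0_right zero_less_diff less_irrefl)
      then obtain j' where j': "j = Suc j'" by (cases j) auto
      have "b = (a + e) + e * j'" using j j' ab(3) by simp
      moreover have "a + e \<in> V" using ab(1) G by blast
      ultimately have "b \<in> V" using mult_in[OF add eV] by metis
      thus False using ab(2) G by blast
    qed
    show "a = b" using gen[OF a b] gen[OF b a] m by (cases "a < b") (auto, metis linorder_neqE_nat)
  qed
  have "card G = card ((\<lambda>y. y mod e) ` G)" using inj by (simp add: card_image)
  also have "\<dots> \<le> card {1..<e}" using img by (rule card_mono[rotated]) simp
  finally show ?thesis by simp
qed



context ctx begin

lemma V_inf: "infinite V"
proof
  assume "finite V"
  hence "finite {cc..}" using cond_props(2) finite_subset by blast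
  thus False using infinite_Ici by blast
qed

lemma S_ge_c: "int cc \<le> y \<Longrightarrow> y \<in> S"
  using vals_mono[OF up_c_R] vals_up by auto

lemma notS_lt: "y \<notin> S \<Longrightarrow> y < int cc"
  using S_ge_c by (meson not_le)

lemma x_exists: "\<exists>x. x \<in> R \<and> x \<noteq> 0 \<and> v x = int ee"
proof -
  have "int ee \<in> S" using e_props(1) V_iff by blast
  thus ?thesis using valsD by blast
qed

lemma V_elem: "w \<in> V \<Longrightarrow> \<exists>a. a \<in> R \<and> a \<noteq> 0 \<and> v a = int w"
proof -
  assume "w \<in> V" hence "int w \<in> S" using V_iff by blast
  thus ?thesis using valsD by blast
qed

lemma card_int: "card (int ` X) = card X" by (simp add: card_image)

lemma delta_eq: "len R (vring v) R = card ({..<cc} - V)"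
proof -
  have "len R (vring v) R = card (vals (vring v) - S)"
    by (rule len_eq[of R "vring v" "int cc" 0]) (use Rmod_R Rmod_up vring_up R_sub_vring up_c_R in auto)
  also have "vals (vring v) - S = int ` ({..<cc} - V)"
  proof
    show "vals (vring v) - S \<subseteq> int ` ({..<cc} - V)"
    proof
      fix y assume y: "y \<in> vals (vring v) - S"
      hence y0: "0 \<le> y" using vals_up vring_up by auto
      have "y < int cc"
      proof (rule ccontr)
        assume "\<not> y < int cc" hence "y \<in> S" using S_ge_c by simp
        thus False using y by blast
      qed
      moreover have "nat y \<notin> V" using y S_iff y0 by blast
      ultimately show "y \<in> int ` ({..<cc} - V)" using y0 by (intro image_eqI[of _ _ "nat y"]) auto
    qed
    show "int ` ({..<cc} - V) \<subseteq> vals (vring v) - S"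
      using vals_up vring_up V_iff by auto
  qed
  finally show ?thesis using card_int by simp
qed

lemma n_eq: "cc - len R (vring v) R = card {y\<in>V. y < cc}"
proof -
  have "{..<cc} = ({..<cc} - V) \<union> {y\<in>V. y < cc}" by auto
  hence "card {..<cc} = card ({..<cc} - V) + card {y\<in>V. y < cc}"
    by (metis (no_types, lifting) card_Un_disjoint finite_Diff finite_lessThan finite_subset
        Diff_disjoint Int_commute inf_le2 Collect_mem_eq lessThan_iff mem_Collect_eq subsetI
        disjoint_iff DiffE)
  thus ?thesis using delta_eq by simp
qed

abbreviation "JJ \<equiv> {y\<in>V. cc - ee \<le> y \<and> y < cc}"

lemma up_mul: "z \<in> up b \<Longrightarrow> y \<in> up b' \<Longrightarrow> z * y \<in> up (b + b')"
  unfolding up_def using vmul[of z y] by (cases "z = 0"; cases "y = 0") auto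

lemma up_c_mul_R: "z \<in> up (int cc) \<Longrightarrow> y \<in> R \<Longrightarrow> z * y \<in> R"
  using up_mul[of z "int cc" y 0] R_up0 up_c_R by auto

lemma k_eq:
  assumes x: "x \<in> maxideal R" "x \<noteq> 0" "v x = int ee"
  shows "len R R {z + x * a | z a. z \<in> conductor R v \<and> a \<in> R} = card JJ"
proof -
  let ?N = "{z + x * a | z a. z \<in> up (int cc) \<and> a \<in> R}"
  have xR: "x \<in> R" using x m_sub by blast
  have Nmod: "Rmod R ?N"
    unfolding Rmod_def
  proof (intro conjI ballI)
    show "0 \<in> ?N" using R0 unfolding up_def by (intro CollectI exI[of _ 0]) auto
    fix p q assume "p \<in> ?N" "q \<in> ?N"
    then obtain z a z' a' where "p = z + x * a" "q = z' + x * a'" "z \<in> up (int cc)" "a \<in> R"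
      "z' \<in> up (int cc)" "a' \<in> R" by blast
    thus "p + q \<in> ?N" using Rmod_add[OF Rmod_up] Radd
      by (intro CollectI exI[of _ "z + z'"] exI[of _ "a + a'"]) (auto simp: algebra_simps)
  next
    fix r p assume r: "r \<in> R" and "p \<in> ?N"
    then obtain z a where "p = z + x * a" "z \<in> up (int cc)" "a \<in> R" by blast
    hence "r * p = r * z + x * (r * a)" "r * z \<in> up (int cc)" "r * a \<in> R"
      using Rmod_smul[OF Rmod_up r, of z "int cc"] Rmul[OF r, of a] by (auto simp: algebra_simps)
    thus "r * p \<in> ?N" by blast
  qed
  have NR: "?N \<subseteq> R" using up_c_R xR Radd Rmul by blast
  have cN: "up (int cc) \<subseteq> ?N"
  proof
    fix z assume "z \<in> up (int cc)" thus "z \<in> ?N" using R0 by (intro CollectI exI[of _ z] exI[of _ 0]) auto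
  qed
  have "len R R ?N = card (S - vals ?N)"
    by (rule len_eq[of ?N R "int cc" 0]) (use Nmod Rmod_R NR cN R_up0 in auto)
  also have "S - vals ?N = int ` {w\<in>V. w < cc \<and> (w < ee \<or> w - ee \<notin> V)}"
  proof
    show "S - vals ?N \<subseteq> int ` {w\<in>V. w < cc \<and> (w < ee \<or> w - ee \<notin> V)}"
    proof
      fix y assume y: "y \<in> S - vals ?N"
      have y0: "0 \<le> y" using y S_nonneg by blast
      have yc: "y < int cc"
      proof (rule ccontr)
        assume "\<not> y < int cc"
        hence "y \<in> vals ?N" using vals_mono[OF cN] vals_up by auto
        thus False using y by blast
      qed
      have ye: "\<not> (int ee \<le> y \<and> y - int ee \<in> S)"
      proof
        assume h: "int ee \<le> y \<and> y - int ee \<in> S"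
        then obtain a where a: "a \<in> R" "a \<noteq> 0" "v a = y - int ee" using valsD by blast
        have "x * a \<in> ?N" using a R0 unfolding up_def by (intro CollectI exI[of _ 0] exI[of _ a]) auto
        moreover have "v (x * a) = y" using vmul[OF x(2) a(2)] a x by simp
        ultimately have "y \<in> vals ?N" using valsI[of "x * a" ?N] x a by force
        thus False using y by blast
      qed
      have "nat y \<in> V" using y y0 S_iff by blast
      moreover have "nat y < cc" using yc y0 by linarith
      moreover have "nat y < ee \<or> nat y - ee \<notin> V"
      proof (cases "nat y < ee")
        case False
        hence "int ee \<le> y" using y0 by simp
        hence "y - int ee \<notin> S" using ye by blast
        hence "nat (y - int ee) \<notin> V" using S_iff \<open>int ee \<le> y\<close> by simp
        moreover have "nat (y - int ee) = nat y - ee" by simp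
        ultimately show ?thesis by simp
      qed simp
      ultimately show "y \<in> int ` {w\<in>V. w < cc \<and> (w < ee \<or> w - ee \<notin> V)}"
        using y0 by (intro image_eqI[of _ _ "nat y"]) auto
    qed
  next
    show "int ` {w\<in>V. w < cc \<and> (w < ee \<or> w - ee \<notin> V)} \<subseteq> S - vals ?N"
    proof
      fix y assume "y \<in> int ` {w\<in>V. w < cc \<and> (w < ee \<or> w - ee \<notin> V)}"
      then obtain w where w: "w \<in> V" "w < cc" "w < ee \<or> w - ee \<notin> V" "y = int w" by blast
      have "y \<in> S" using w V_iff by simp
      moreover have "y \<notin> vals ?N"
      proof
        assume "y \<in> vals ?N"
        then obtain p where p: "p \<in> ?N" "p \<noteq> 0" "v p = y" using valsD by blast
        then obtain z a where za: "p = z + x * a" "z \<in> up (int cc)" "a \<in> R" by blast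
        have bad: False if a0: "a \<noteq> 0" and vv: "v (x * a) = y" 
        proof -
          have "v a = y - int ee" using vmul[OF x(2) a0] vv x by simp
          hence "y - int ee \<in> S" using valsI[OF za(3) a0] by simp
          moreover have "int ee \<le> y" using \<open>v a = y - int ee\<close> vR[OF za(3) a0] by simp
          ultimately show False using w S_iff[of "y - int ee"] by (auto simp: nat_diff_distrib)
        qed
        show False
        proof (cases "a = 0")
          case True
          hence "p = z" using za by simp
          hence "int cc \<le> y" using za p unfolding up_def by auto
          thus False using w by simp
        next
          case a0: False
          have xa0: "x * a \<noteq> 0" using a0 x by simp
          show False
          proof (cases "z = 0")
            case True thus False using bad a0 za p by simp
          next
            case z0: False
            have vz: "int cc \<le> v z" using za z0 unfolding up_def by simp
            show False
            proof (cases "v (x * a) < int cc")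
              case True
              hence "v (x * a + z) = v (x * a)" using vstrict[OF xa0 z0] vz by simp
              thus False using bad a0 za p by (simp add: add.commute)
            next
              case False
              hence "x * a \<in> up (int cc)" unfolding up_def by simp
              hence "p \<in> up (int cc)" using za Rmod_add[OF Rmod_up] by simp
              hence "int cc \<le> y" using p unfolding up_def by auto
              thus False using w by simp
            qed
          qed
        qed
      qed
      ultimately show "y \<in> S - vals ?N" by blast
    qed
  qed
  finally have "len R R ?N = card {w\<in>V. w < cc \<and> (w < ee \<or> w - ee \<notin> V)}" using card_int by simp
  also have "\<dots> = card JJ"
    by (rule apery_card) (use V_add e_props e_le_c in auto)
  finally show ?thesis using conductor_eq by simp
qed


lemma cm_eq: "len R {a\<in>R. \<forall>y\<in>maxideal R. a * y \<in> conductor R v} (conductor R v) = card JJ"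
proof -
  let ?Cm = "{a\<in>R. \<forall>y\<in>maxideal R. a * y \<in> up (int cc)}"
  have Cmod: "Rmod R ?Cm" unfolding Rmod_def
  proof (intro conjI ballI)
    show "0 \<in> ?Cm" using R0 unfolding up_def by simp
    fix p q assume p: "p \<in> ?Cm" and q: "q \<in> ?Cm"
    have "(p + q) * y \<in> up (int cc)" if "y \<in> maxideal R" for y
      using p q that Rmod_add[OF Rmod_up, of "p * y" "int cc" "q * y"] by (simp add: distrib_right)
    thus "p + q \<in> ?Cm" using p q Radd by blast
  next
    fix r p assume r: "r \<in> R" and p: "p \<in> ?Cm"
    have "(r * p) * y \<in> up (int cc)" if "y \<in> maxideal R" for y
      using p that Rmod_smul[OF Rmod_up r, of "p * y" "int cc"] by (simp add: mult.assoc)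
    thus "r * p \<in> ?Cm" using p r Rmul by blast
  qed
  have cCm: "up (int cc) \<subseteq> ?Cm"
  proof
    fix z assume z: "z \<in> up (int cc)"
    have "z * y \<in> up (int cc)" if "y \<in> maxideal R" for y
      using up_mul[OF z, of y 0] that m_sub R_up0 by auto
    thus "z \<in> ?Cm" using z up_c_R by blast
  qed
  obtain x where x: "x \<in> R" "x \<noteq> 0" "v x = int ee"
    using x_exists by blast
  have xm: "x \<in> maxideal R" using in_m x e_props(2) by simp
  have Cmup: "?Cm \<subseteq> up (int cc - int ee)"
  proof
    fix a assume a: "a \<in> ?Cm"
    show "a \<in> up (int cc - int ee)"
    proof (cases "a = 0")
      case False
      have "a * x \<in> up (int cc)" using a xm by blast
      moreover have "a * x \<noteq> 0" using False x by simp
      ultimately have "int cc \<le> v a + int ee" using vmul[OF False x(2)] x unfolding up_def by simp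
      thus ?thesis unfolding up_def by simp
    qed (simp add: up_def)
  qed
  have "len R ?Cm (up (int cc)) = card (vals ?Cm - vals (up (int cc)))"
    by (rule len_eq[of "up (int cc)" ?Cm "int cc" "int cc - int ee"]) (use Cmod Rmod_up cCm Cmup in auto)
  also have "vals ?Cm - vals (up (int cc)) = int ` JJ"
  proof
    show "vals ?Cm - vals (up (int cc)) \<subseteq> int ` JJ"
    proof
      fix y assume y: "y \<in> vals ?Cm - vals (up (int cc))"
      then obtain a where a: "a \<in> ?Cm" "a \<noteq> 0" "v a = y" using valsD by blast
      have yS: "y \<in> S" using valsI[of a R] a by auto
      have y0: "0 \<le> y" using S_nonneg yS by blast
      have "int cc - int ee \<le> y" using Cmup a unfolding up_def by auto
      moreover have "y < int cc" using y vals_up by auto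
      ultimately show "y \<in> int ` JJ" using y0 yS S_iff
        by (intro image_eqI[of _ _ "nat y"]) (auto simp: e_le_c of_nat_diff)
    qed
    show "int ` JJ \<subseteq> vals ?Cm - vals (up (int cc))"
    proof
      fix y assume yJ: "y \<in> int ` JJ"
      then obtain w where wJ: "w \<in> JJ" and yw: "y = int w" by (rule imageE)
      hence w: "w \<in> V" "cc - ee \<le> w" "w < cc" by auto
      obtain a where a: "a \<in> R" "a \<noteq> 0" "v a = int w" using V_elem[OF w(1)] by blast
      have "a * q \<in> up (int cc)" if q: "q \<in> maxideal R" for q
      proof (cases "q = 0")
        case False
        have "int ee \<le> v q" using m_val q False .
        moreover have "int cc - int ee \<le> v a" using a w(2) e_le_c by (simp add: of_nat_diff)
        ultimately show ?thesis unfolding up_def using vmul[OF a(2) False] by simp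
      qed (simp add: up_def)
      hence "a \<in> ?Cm" using a(1) by blast
      hence "int w \<in> vals ?Cm" using valsI[of a ?Cm] a by simp
      moreover have "int w \<notin> vals (up (int cc))" using w(3) vals_up by simp
      ultimately show "y \<in> vals ?Cm - vals (up (int cc))" using yw by simp
    qed
  qed
  finally show ?thesis using conductor_eq card_int by simp
qed

lemma colon_m_facts:
  "R \<subseteq> colon R (maxideal R)" "colon R (maxideal R) \<subseteq> up (- int ee)"
proof -
  show "R \<subseteq> colon R (maxideal R)" unfolding colon_def using m_sub Rmul by blast
  obtain x where x: "x \<in> R" "x \<noteq> 0" "v x = int ee"
    using x_exists by blast
  have xm: "x \<in> maxideal R" using in_m x e_props(2) by simp
  show "colon R (maxideal R) \<subseteq> up (- int ee)"
  proof
    fix z assume z: "z \<in> colon R (maxideal R)"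
    show "z \<in> up (- int ee)"
    proof (cases "z = 0")
      case False
      have "z * x \<in> R" using z xm unfolding colon_def by blast
      hence "0 \<le> v (z * x)" using vR False x by simp
      thus ?thesis using vmul[OF False x(2)] x unfolding up_def by simp
    qed (simp add: up_def)
  qed
qed

lemma r_formula: "len R (colon R (maxideal R)) R = card (vals (colon R (maxideal R)) - S)"
  by (rule len_eq[of R "colon R (maxideal R)" "int cc" "- int ee"])
     (use Rmod_R Rmod_colon colon_m_facts up_c_R in auto)

lemma r_le: "len R (colon R (maxideal R)) R \<le> ee - 1"
proof -
  let ?G = "{y. y \<in> {1..<cc} \<and> y \<notin> V \<and> y + ee \<in> V}"
  have sub: "vals (colon R (maxideal R)) - S \<subseteq> int ` ?G"
  proof
    fix y assume y: "y \<in> vals (colon R (maxideal R)) - S"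
    then obtain z where z: "z \<in> colon R (maxideal R)" "z \<noteq> 0" "v z = y" using valsD by blast
    obtain x where x: "x \<in> R" "x \<noteq> 0" "v x = int ee"
      using x_exists by blast
    have xm: "x \<in> maxideal R" using in_m x e_props(2) by simp
    have zx: "z * x \<in> R" "z * x \<noteq> 0" using z xm x unfolding colon_def by auto
    have ye: "y + int ee \<in> S" using valsI[OF zx] vmul[OF z(2) x(2)] z x by simp
    have yge: "- int ee \<le> y" using S_nonneg[OF ye] by simp
    have y0: "0 \<le> y"
    proof (rule ccontr)
      assume neg: "\<not> 0 \<le> y"
      have "y + int ee = 0"
      proof (rule ccontr)
        assume "y + int ee \<noteq> 0"
        hence pos: "0 < y + int ee" using yge by simp
        have "nat (y + int ee) \<in> V" using S_iff[of "y + int ee"] ye pos by simp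
        hence "ee \<le> nat (y + int ee)" using e_props(3) pos by simp
        hence "int ee \<le> y + int ee" using le_nat_iff[of "y + int ee" ee] pos by simp
        thus False using neg by linarith
      qed
      hence ym: "y = - int ee" by simp
      define a where "a = pw (int cc - 1 + int ee)"
      have aR: "a \<in> R" unfolding a_def using up_c_R e_props(2) unfolding up_def by auto
      have a0: "a \<noteq> 0" unfolding a_def using pw_ne .
      have "0 < int cc - 1 + int ee" using c_pos e_props(2) by linarith
      hence am: "a \<in> maxideal R" using in_m[OF aR] unfolding a_def by simp
      have za: "z * a \<in> R" "z * a \<noteq> 0" using z am a0 unfolding colon_def by auto
      have "v (z * a) = int cc - 1" using vmul[OF z(2) a0] ym z unfolding a_def by simp
      hence "int cc - 1 \<in> S" using valsI[OF za] by simp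
      moreover have "int cc - 1 = int (cc - 1)" using c_pos by simp
      ultimately have "int (cc - 1) \<in> S" by metis
      hence "cc - 1 \<in> V" by (rule iffD2[OF V_iff])
      thus False using cm1 by blast
    qed
    have h1: "y \<noteq> 0" using y S_0 by blast
    have h2: "y < int cc" using y notS_lt by blast
    have h3: "nat y \<notin> V" using y y0 S_iff by blast
    have h4: "nat y + ee \<in> V" using ye y0 S_iff[of "y + int ee"] by (simp add: nat_add_distrib)
    have h5: "1 \<le> nat y" using h1 y0 by linarith
    have h6: "nat y < cc" using h2 y0 by linarith
    have G: "nat y \<in> ?G" using h3 h4 h5 h6 by simp
    have "y = int (nat y)" using y0 by simp
    thus "y \<in> int ` ?G" using G by (rule image_eqI)
  qed
  have finG: "finite ?G" by (rule finite_subset[of _ "{1..<cc}"]) auto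
  have "card (vals (colon R (maxideal R)) - S) \<le> card (int ` ?G)"
    using card_mono[OF _ sub] finG by simp
  also have "\<dots> = card ?G" by (rule card_int)
  also have "\<dots> \<le> ee - 1"
    by (rule gap_card[of V ee ?G]) (use V_add e_props V_0 finG in auto)
  finally show ?thesis using r_formula by simp
qed

lemma r_ge: "ee \<le> len R (colon R (maxideal R)) R + card JJ"
proof -
  have sub: "int ` ({cc - ee..<cc} - V) \<subseteq> vals (colon R (maxideal R)) - S"
  proof
    fix y assume "y \<in> int ` ({cc - ee..<cc} - V)"
    then obtain w where w0: "w \<in> {cc - ee..<cc} - V" and yw: "y = int w" by (rule imageE)
    hence w: "cc - ee \<le> w" "w < cc" "w \<notin> V" "y = int w" by auto
    have "pw y \<in> colon R (maxideal R)" unfolding colon_def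
    proof (intro CollectI ballI)
      fix q assume q: "q \<in> maxideal R"
      show "pw y * q \<in> R"
      proof (cases "q = 0")
        case True thus ?thesis using R0 by simp
      next
        case False
        have "int ee \<le> v q" using m_val q False .
        moreover have "int cc - int ee \<le> y" using w e_le_c by (simp add: of_nat_diff)
        ultimately have "pw y * q \<in> up (int cc)" unfolding up_def using vmul[OF pw_ne False] by simp
        thus ?thesis using up_c_R by blast
      qed
    qed
    hence "y \<in> vals (colon R (maxideal R))" using valsI[of "pw y" "colon R (maxideal R)"] pw_ne by simp
    moreover have "y \<notin> S" using w V_iff by simp
    ultimately show "y \<in> vals (colon R (maxideal R)) - S" by blast
  qed
  have fin: "finite (vals (colon R (maxideal R)) - S)"
    by (rule fin_diff[of "int cc" R "colon R (maxideal R)" "- int ee"]) (use up_c_R colon_m_facts in auto)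
  have "card ({cc - ee..<cc} - V) = card (int ` ({cc - ee..<cc} - V))" using card_int by simp
  also have "\<dots> \<le> card (vals (colon R (maxideal R)) - S)" using card_mono[OF fin sub] .
  finally have c1: "card ({cc - ee..<cc} - V) \<le> len R (colon R (maxideal R)) R" using r_formula by simp
  have u: "{cc - ee..<cc} = ({cc - ee..<cc} - V) \<union> JJ" by auto
  have d: "({cc - ee..<cc} - V) \<inter> JJ = {}" by auto
  have f: "finite JJ" by (rule finite_subset[of _ "{..<cc}"]) auto
  have "card (({cc - ee..<cc} - V) \<union> JJ) = card ({cc - ee..<cc} - V) + card JJ"
    by (rule card_Un_disjoint[OF _ f d]) simp
  hence "card {cc - ee..<cc} = card ({cc - ee..<cc} - V) + card JJ" using u by simp
  moreover have "card {cc - ee..<cc} = ee" using e_le_c by simp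
  ultimately show ?thesis using c1 by linarith
qed

end


context ctx begin

abbreviation "nn \<equiv> card {y\<in>V. y < cc}"
abbreviation "sv j \<equiv> sval R v j"
abbreviation "Q j \<equiv> colon R (Rsub R v j)"

lemma sv_def': "sv j = enumerate V j" unfolding sval_def by simp

lemma sv_in: "sv j \<in> V" unfolding sv_def' using enumerate_in_set[OF V_inf] .

lemma sv_mono: "i \<le> j \<Longrightarrow> sv i \<le> sv j" unfolding sv_def' using V_inf by simp

lemma sv_smono: "i < j \<Longrightarrow> sv i < sv j" unfolding sv_def' using V_inf by simp

lemma sv_nn: "sv nn = cc" unfolding sv_def' by (rule enum_eq[OF V_inf cond_props(1) refl])

lemma sv_le_c: "j \<le> nn \<Longrightarrow> sv j \<le> cc" using sv_mono[of j nn] sv_nn by simp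

lemma sv_lt_c: "j < nn \<Longrightarrow> sv j < cc" using sv_smono[of j nn] sv_nn by simp

lemma Rsub_eq: "Rsub R v j = R \<inter> up (int (sv j))" unfolding Rsub_def up_def by auto

lemma Q_R: "R \<subseteq> Q j" unfolding colon_def Rsub_def using Rmul by auto

lemma Q_mono: "i \<le> j \<Longrightarrow> Q i \<subseteq> Q j"
proof -
  assume "i \<le> j"
  hence "Rsub R v j \<subseteq> Rsub R v i" unfolding Rsub_def using sv_mono[of i j] by auto
  thus ?thesis unfolding colon_def by blast
qed

lemma Q_low: "j \<le> nn \<Longrightarrow> Q j \<subseteq> up (- int cc)"
proof
  fix z assume j: "j \<le> nn" and z: "z \<in> Q j"
  show "z \<in> up (- int cc)"
  proof (cases "z = 0")
    case False
    obtain a where a: "a \<in> R" "a \<noteq> 0" "v a = int (sv j)" using V_elem[OF sv_in] by blast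
    have "a \<in> Rsub R v j" unfolding Rsub_def using a by simp
    hence "z * a \<in> R" using z unfolding colon_def by blast
    moreover have "z * a \<noteq> 0" using False a by simp
    ultimately have "0 \<le> v (z * a)" using vR by blast
    hence "- int (sv j) \<le> v z" using vmul[OF False a(2)] a by simp
    moreover have "sv j \<le> cc" using sv_le_c j .
    ultimately show ?thesis unfolding up_def by simp
  qed (simp add: up_def)
qed

lemma Q_up: "int cc \<le> y + int (sv j) \<Longrightarrow> pw y \<in> Q j"
  unfolding colon_def
proof (intro CollectI ballI)
  fix a assume y: "int cc \<le> y + int (sv j)" and a: "a \<in> Rsub R v j"
  show "pw y * a \<in> R"
  proof (cases "a = 0")
    case True thus ?thesis using R0 by simp
  next
    case False
    hence "int (sv j) \<le> v a" using a unfolding Rsub_def by simp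
    hence "pw y * a \<in> up (int cc)" unfolding up_def using vmul[OF pw_ne False] y by simp
    thus ?thesis using up_c_R by blast
  qed
qed

abbreviation "W j \<equiv> vals (Q j)"

lemma rr_eq: "1 \<le> i \<Longrightarrow> i \<le> nn \<Longrightarrow> rr R v i = card (W i - W (i - 1))"
  unfolding rr_def
  by (rule len_eq[of "Q (i - 1)" "Q i" "int cc" "- int cc"])
     (use Rmod_colon Q_mono[of "i - 1" i] up_c_R Q_R[of "i - 1"] Q_low[of i] in auto)

lemma W_fin: "j \<le> nn \<Longrightarrow> finite (W j - W i)"
  by (rule fin_diff[of "int cc" "Q i" "Q j" "- int cc"]) (use up_c_R Q_R Q_low in auto)

lemma W_mono: "i \<le> j \<Longrightarrow> W i \<subseteq> W j" using vals_mono Q_mono by blast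

lemma rr_pos: "1 \<le> i \<Longrightarrow> i \<le> nn \<Longrightarrow> 1 \<le> rr R v i"
proof -
  assume i: "1 \<le> i" "i \<le> nn"
  define y where "y = int cc - 1 - int (sv (i - 1))"
  have lt: "sv (i - 1) < sv i" using sv_smono[of "i - 1" i] i by simp
  have "pw y \<in> Q i" by (rule Q_up) (use lt in \<open>simp add: y_def\<close>)
  hence yW: "y \<in> W i" using valsI[of "pw y" "Q i"] pw_ne by simp
  have "y \<notin> W (i - 1)"
  proof
    assume "y \<in> W (i - 1)"
    then obtain z where z: "z \<in> Q (i - 1)" "z \<noteq> 0" "v z = y" using valsD by blast
    obtain a where a: "a \<in> R" "a \<noteq> 0" "v a = int (sv (i - 1))" using V_elem[OF sv_in] by blast
    have "a \<in> Rsub R v (i - 1)" unfolding Rsub_def using a by simp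
    hence za: "z * a \<in> R" using z unfolding colon_def by blast
    have za0: "z * a \<noteq> 0" using z a by simp
    have "v (z * a) = int cc - 1" using vmul[OF z(2) a(2)] z a unfolding y_def by simp
    hence "int cc - 1 \<in> S" using valsI[OF za za0] by simp
    moreover have "int cc - 1 = int (cc - 1)" using c_pos by simp
    ultimately have "int (cc - 1) \<in> S" by metis
    hence "cc - 1 \<in> V" by (rule iffD2[OF V_iff])
    thus False using cm1 by blast
  qed
  hence "y \<in> W i - W (i - 1)" using yW by blast
  hence "W i - W (i - 1) \<noteq> {}" by blast
  hence "card (W i - W (i - 1)) \<noteq> 0" using W_fin[OF i(2)] by simp
  thus ?thesis using rr_eq[OF i] by simp
qed

lemma telescope: "j0 + d \<le> nn \<Longrightarrow> (\<Sum>i\<in>{Suc j0..j0 + d}. rr R v i) = card (W (j0 + d) - W j0)"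
proof (induction d)
  case 0 thus ?case by simp
next
  case (Suc d)
  have IH: "(\<Sum>i\<in>{Suc j0..j0 + d}. rr R v i) = card (W (j0 + d) - W j0)" using Suc by simp
  have "{Suc j0..j0 + Suc d} = insert (Suc (j0 + d)) {Suc j0..j0 + d}" by auto
  hence A: "(\<Sum>i\<in>{Suc j0..j0 + Suc d}. rr R v i) = rr R v (Suc (j0 + d)) + card (W (j0 + d) - W j0)"
    using IH by simp
  have B: "rr R v (Suc (j0 + d)) = card (W (Suc (j0 + d)) - W (j0 + d))"
    using rr_eq[of "Suc (j0 + d)"] Suc.prems by simp
  have C: "card (W (Suc (j0 + d)) - W (j0 + d)) + card (W (j0 + d) - W j0)
      = card ((W (Suc (j0 + d)) - W (j0 + d)) \<union> (W (j0 + d) - W j0))"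
    by (rule card_Un_disjoint[symmetric]) (use W_fin Suc.prems in auto)
  have D: "(W (Suc (j0 + d)) - W (j0 + d)) \<union> (W (j0 + d) - W j0) = W (j0 + Suc d) - W j0"
    using W_mono[of j0 "j0 + d"] W_mono[of "j0 + d" "Suc (j0 + d)"] by auto
  show ?case using A B C D by simp
qed

lemma Wnn_nonneg: "y \<in> W nn \<Longrightarrow> 0 \<le> y"
proof (rule ccontr)
  assume y: "y \<in> W nn" and neg: "\<not> 0 \<le> y"
  then obtain z where z: "z \<in> Q nn" "z \<noteq> 0" "v z = y" using valsD by blast
  define w where "w = pw (int cc - 1 - y)"
  have "w \<in> up (int cc)" unfolding w_def up_def using neg by simp
  hence wR: "w \<in> Rsub R v nn" using up_c_R Rsub_eq sv_nn by auto
  have zw: "z * w \<in> R" using z wR unfolding colon_def by blast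
  have zw0: "z * w \<noteq> 0" using z pw_ne unfolding w_def by simp
  have "v (z * w) = int cc - 1" using vmul[OF z(2) pw_ne] z unfolding w_def by simp
  hence "int cc - 1 \<in> S" using valsI[OF zw zw0] by simp
  moreover have "int cc - 1 = int (cc - 1)" using c_pos by simp
  ultimately have "int (cc - 1) \<in> S" by metis
  hence "cc - 1 \<in> V" by (rule iffD2[OF V_iff])
  thus False using cm1 by blast
qed

lemma W0: "0 \<in> W j"
  using valsI[of 1 "Q j"] Q_R R1 v1 by auto

lemma final_bound:
  assumes j0: "j0 \<le> nn" and s0: "cc - ee \<le> sv j0"
  shows "card (W nn - W j0) \<le> ee - 1"
    and "card (W nn - W j0) = ee - 1 \<Longrightarrow> sv j0 = cc - ee"
proof -
  have big: "y \<in> W j0" if "int cc \<le> y + int (sv j0)" for y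
    using Q_up[OF that] valsI[of "pw y" "Q j0"] pw_ne by simp
  have sub: "W nn - W j0 \<subseteq> {1..<int ee}"
  proof
    fix y assume y: "y \<in> W nn - W j0"
    have "0 \<le> y" using Wnn_nonneg y by blast
    moreover have "y \<noteq> 0" using y W0 by blast
    moreover have "y < int ee"
    proof (rule ccontr)
      assume "\<not> y < int ee"
      hence "int cc \<le> y + int (sv j0)" using s0 e_le_c by linarith
      thus False using big y by blast
    qed
    ultimately show "y \<in> {1..<int ee}" by simp
  qed
  have "card (W nn - W j0) \<le> card {1..<int ee}" by (rule card_mono[OF _ sub]) simp
  thus c1: "card (W nn - W j0) \<le> ee - 1" by simp
  assume eq: "card (W nn - W j0) = ee - 1"
  show "sv j0 = cc - ee"
  proof (rule ccontr)
    assume "sv j0 \<noteq> cc - ee"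
    hence gt: "cc - ee + 1 \<le> sv j0" using s0 by simp
    have "int ee - 1 \<in> W j0" by (rule big) (use gt e_le_c in linarith)
    hence "W nn - W j0 \<subseteq> {1..<int ee - 1}" using sub
    proof -
      assume h: "int ee - 1 \<in> W j0"
      show ?thesis
      proof
        fix y assume y: "y \<in> W nn - W j0"
        hence "y \<in> {1..<int ee}" using sub by blast
        moreover have "y \<noteq> int ee - 1" using y h by blast
        ultimately show "y \<in> {1..<int ee - 1}" by auto
      qed
    qed
    hence "card (W nn - W j0) \<le> card {1..<int ee - 1}" by (rule card_mono[rotated]) simp
    hence "card (W nn - W j0) \<le> ee - 2" by simp
    thus False using eq e_ge2 by simp
  qed
qed

end



theorem theorem1p4:
  fixes R :: "'a::field set" and v :: "'a \<Rightarrow> int" and x :: 'a and i0 :: nat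
  assumes "setting R v"
    and "1 \<le> i0"
    and "i0 \<le> cond_c R v - len R (vring v) R"
    and "sval R v (i0 - 1) = (LEAST y. y \<in> valset R v \<and> cond_c R v - mult_e R v \<le> y)"
    and "x \<in> maxideal R" and "x \<noteq> 0" and "v x = int (mult_e R v)"
  shows "let c = cond_c R v; \<delta> = len R (vring v) R; n = c - \<delta>;
             r = len R (colon R (maxideal R)) R; e = mult_e R v;
             C = conductor R v; B = {i0..n};
             k = len R R {z + x * a | z a. z \<in> C \<and> a \<in> R};
             Cm = {a\<in>R. \<forall>y\<in>maxideal R. a * y \<in> C}
         in (k = card B \<and> card B = len R Cm C \<and> int e - int r \<le> int k \<and> int e - int r > 0)
          \<and> (k \<le> (\<Sum>i\<in>B. rr R v i) \<and> (\<Sum>i\<in>B. rr R v i) \<le> e - 1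
             \<and> ((\<Sum>i\<in>B. rr R v i) = e - 1 \<longrightarrow> sval R v (i0 - 1) = c - e))"
proof -
  interpret ctx R v using assms(1) by unfold_locales
  define c where "c = cond_c R v"
  define e where "e = mult_e R v"
  define n where "n = card {y\<in>valset R v. y < c}"
  define j0 where "j0 = i0 - 1"
  define J where "J = {y\<in>valset R v. c - e \<le> y \<and> y < c}"
  have nd: "cond_c R v - len R (vring v) R = n" unfolding n_def c_def using n_eq .
  have i0n: "i0 \<le> n" using assms(3) nd by simp
  have j0n: "j0 < n" using i0n assms(2) unfolding j0_def by simp
  have i0j: "i0 = Suc j0" using assms(2) unfolding j0_def by simp
  have ex: "c \<in> valset R v \<and> c - e \<le> c" using cond_props(1) unfolding c_def by simp
  have L: "sval R v j0 \<in> valset R v \<and> c - e \<le> sval R v j0"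
    using LeastI[of "\<lambda>y. y \<in> valset R v \<and> c - e \<le> y", OF ex] assms(4)
    unfolding j0_def c_def e_def by simp
  have Lmin: "\<And>y. y \<in> valset R v \<Longrightarrow> c - e \<le> y \<Longrightarrow> sval R v j0 \<le> y"
    using assms(4) Least_le[of "\<lambda>y. y \<in> valset R v \<and> c - e \<le> y"]
    unfolding j0_def c_def e_def by simp
  have cntL: "card {y\<in>valset R v. y < sval R v j0} = j0"
    unfolding sval_def by (rule enum_count[OF V_inf])
  have eqset: "{y\<in>valset R v. y < sval R v j0} = {y\<in>valset R v. y < c - e}"
  proof
    show "{y\<in>valset R v. y < sval R v j0} \<subseteq> {y\<in>valset R v. y < c - e}"
      using Lmin by force
    show "{y\<in>valset R v. y < c - e} \<subseteq> {y\<in>valset R v. y < sval R v j0}"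
      using L by auto
  qed
  have u: "{y\<in>valset R v. y < c} = {y\<in>valset R v. y < c - e} \<union> J" unfolding J_def by auto
  have dj: "{y\<in>valset R v. y < c - e} \<inter> J = {}" unfolding J_def by auto
  have fJ: "finite J" unfolding J_def by (rule finite_subset[of _ "{..<c}"]) auto
  have "n = card {y\<in>valset R v. y < c - e} + card J"
    unfolding n_def u by (rule card_Un_disjoint[OF _ fJ dj]) simp
  hence cJ: "card J = n - j0" using cntL eqset by simp
  have cB: "card {i0..n} = n - j0" using i0j by simp
  have k: "len R R {z + x * a | z a. z \<in> conductor R v \<and> a \<in> R} = card J"
    unfolding J_def c_def e_def by (rule k_eq[OF assms(5,6,7)])
  have cm: "len R {a\<in>R. \<forall>y\<in>maxideal R. a * y \<in> conductor R v} (conductor R v) = card J"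
    unfolding J_def c_def e_def by (rule cm_eq)
  have rle: "len R (colon R (maxideal R)) R \<le> e - 1" unfolding e_def by (rule r_le)
  have rge: "e \<le> len R (colon R (maxideal R)) R + card J" unfolding J_def c_def e_def by (rule r_ge)
  have e2: "2 \<le> e" unfolding e_def by (rule e_ge2)
  have tel: "(\<Sum>i\<in>{i0..n}. rr R v i) = card (W n - W j0)"
  proof -
    have "j0 + (n - j0) \<le> n" using j0n by simp
    hence "(\<Sum>i\<in>{Suc j0..j0 + (n - j0)}. rr R v i) = card (W (j0 + (n - j0)) - W j0)"
      unfolding n_def c_def by (rule telescope)
    thus ?thesis using j0n i0j by simp
  qed
  have sge: "card {i0..n} \<le> (\<Sum>i\<in>{i0..n}. rr R v i)"
  proof -
    have "card {i0..n} = (\<Sum>i\<in>{i0..n}. (1::nat))" by simp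
    also have "\<dots> \<le> (\<Sum>i\<in>{i0..n}. rr R v i)"
      by (rule sum_mono) (use rr_pos assms(2) in \<open>auto simp: n_def c_def\<close>)
    finally show ?thesis .
  qed
  have fb1: "card (W n - W j0) \<le> e - 1"
    unfolding n_def c_def e_def by (rule final_bound(1)) (use j0n L in \<open>auto simp: n_def c_def e_def\<close>)
  have fb2: "card (W n - W j0) = e - 1 \<Longrightarrow> sval R v j0 = c - e"
    unfolding n_def c_def e_def by (rule final_bound(2)) (use j0n L in \<open>auto simp: n_def c_def e_def\<close>)
  show ?thesis
  proof -
    have nd': "c - len R (vring v) R = n" using nd unfolding c_def .
    show ?thesis
      unfolding Let_def c_def[symmetric] e_def[symmetric] j0_def[symmetric] nd'
      using k cm rle rge e2 cJ cB tel sge fb1 fb2 by auto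
  qed
qed


end
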